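(* Let $\mathcal{M}\subseteq\mathbb{S}^n$ be a finite union of compact sets, $\mathcal{M}=\bigcup_{i=1}^k\mathcal{M}_i$. Suppose that for all nonzero $X\in\mathbb{S}^n_+$ and all $i\in\{1,\dots,k\}$, if $\langle M_i,X\rangle=0$ for some $M_i\in\mathcal{M}_i$, then $\langle M,X\rangle>0$ for all $M\in\mathcal{M}\setminus\mathcal{M}_i$. Then $\mathcal{S}(\mathcal{M})$ is rank-one generated if and only if $\mathcal{S}(\mathcal{M}_i)$ is rank-one generated for all $i\in\{1,\dots,k\}$.
   Context: $\mathbb{S}^n$ denotes real symmetric $n\times n$ matrices with $\langle A,B\rangle=\mathrm{tr}(AB)$, $\mathbb{S}^n_+$ the PSD cone. For $\mathcal{M}\subseteq\mathbb{S}^n$, $\mathcal{S}(\mathcal{M})=\{X\in\mathbb{S}^n_+:\langle M,X\rangle\ge0\ \forall M\in\mathcal{M}\}$. A closed convex cone $\mathcal{S}\subseteq\mathbb{S}^n_+$ is rank-one generated (ROG) if $\mathcal{S}=\mathrm{conv}(\mathcal{S}\cap\{xx^\top:x\in\mathbb{R}^n\})$. *)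

theory Defs
  imports "HOL-Analysis.Analysis"
begin

definition sym_mat :: "real^'n^'n \<Rightarrow> bool" where
  "sym_mat A \<longleftrightarrow> transpose A = A"

definition symmats :: "(real^'n^'n) set" where
  "symmats = {A. sym_mat A}"

definition mtrace :: "real^'n^'n \<Rightarrow> real" where
  "mtrace A = (\<Sum>i\<in>UNIV. A $ i $ i)"

definition frob :: "real^'n^'n \<Rightarrow> real^'n^'n \<Rightarrow> real" where
  "frob A B = mtrace (A ** B)"

definition psd_cone :: "(real^'n^'n) set" where
  "psd_cone = {X. sym_mat X \<and> (\<forall>x. x \<bullet> (X *v x) \<ge> 0)}"

definition SM :: "(real^'n^'n) set \<Rightarrow> (real^'n^'n) set" where
  "SM \<M> = {X \<in> psd_cone. \<forall>M\<in>\<M>. frob M X \<ge> 0}"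

definition outer :: "real^'n \<Rightarrow> real^'n^'n" where
  "outer x = (\<chi> i j. x $ i * x $ j)"

definition ROG :: "(real^'n^'n) set \<Rightarrow> bool" where
  "ROG S \<longleftrightarrow> S = convex hull (S \<inter> range outer)"

end

theory Submission
  imports Defs
begin


lemma ext_sub_mem: "x extreme_point_of S \<Longrightarrow> x \<in> S"
  by (simp add: extreme_point_of_def)

lemma ext_sub: "x extreme_point_of S \<Longrightarrow> x \<in> T \<Longrightarrow> T \<subseteq> S \<Longrightarrow> x extreme_point_of T"
  by (auto simp: extreme_point_of_def)

lemma frob_eq: "frob M X = (\<Sum>i\<in>UNIV. \<Sum>j\<in>UNIV. M$i$j * X$j$i)"
  by (simp add: frob_def mtrace_def matrix_matrix_mult_def)

lemma frob_lin: "frob M (a *\<^sub>R Y + b *\<^sub>R Z) = a * frob M Y + b * frob M Z"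
  by (simp add: frob_eq algebra_simps sum.distrib sum_distrib_left)

lemma frob_diff: "frob M (Y - Z) = frob M Y - frob M Z"
  by (simp add: frob_eq algebra_simps sum_subtractf)

lemma mtrace_lin: "mtrace (a *\<^sub>R Y + b *\<^sub>R Z) = a * mtrace Y + b * mtrace Z"
  by (simp add: mtrace_def algebra_simps sum.distrib sum_distrib_left)

lemma mtrace_scale: "mtrace (a *\<^sub>R Y) = a * mtrace Y"
  by (simp add: mtrace_def sum_distrib_left)

lemma mtrace_zero[simp]: "mtrace 0 = 0"
  by (simp add: mtrace_def)

lemma mtrace_outer: "mtrace (outer x) = x \<bullet> x"
  by (simp add: mtrace_def outer_def inner_vec_def)

lemma outer_scale: "c \<ge> 0 \<Longrightarrow> c *\<^sub>R outer x = outer (sqrt c *\<^sub>R x)"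
  by (simp add: outer_def vec_eq_iff)

lemma outer_zero[simp]: "outer 0 = 0"
  by (simp add: outer_def vec_eq_iff)

lemma sym_mat_iff: "sym_mat A \<longleftrightarrow> (\<forall>i j. A$i$j = A$j$i)"
  by (auto simp: sym_mat_def transpose_def vec_eq_iff)

lemma quad_outer: "y \<bullet> (outer x *v y) = (x \<bullet> y)^2"
proof -
  have "y \<bullet> (outer x *v y) = (\<Sum>i\<in>UNIV. y$i * (\<Sum>j\<in>UNIV. x$i*x$j*y$j))"
    by (simp add: inner_vec_def matrix_vector_mult_def outer_def)
  also have "\<dots> = (\<Sum>i\<in>UNIV. x$i*y$i) * (\<Sum>j\<in>UNIV. x$j*y$j)"
    by (simp add: sum_distrib_left sum_distrib_right mult_ac)
  finally show ?thesis by (simp add: inner_vec_def power2_eq_square)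
qed

lemma outer_psd: "outer x \<in> psd_cone"
proof -
  have 1: "\<forall>y. y \<bullet> (outer x *v y) \<ge> 0" by (simp add: quad_outer)
  have 2: "sym_mat (outer x)" by (simp add: sym_mat_iff outer_def)
  show ?thesis unfolding psd_cone_def by (rule CollectI, rule conjI[OF 2 1])
qed

lemma quad_add: "(x + y) \<bullet> (X *v (x + y)) = x \<bullet> (X *v x) + x \<bullet> (X *v y) + y \<bullet> (X *v x) + y \<bullet> (X *v y)"
  by (simp add: matrix_vector_right_distrib inner_add_left inner_add_right)

lemma bil_axis_r: "x \<bullet> (X *v axis i t) = t * (\<Sum>k\<in>UNIV. x$k * X$k$i)"
  by (simp add: inner_vec_def matrix_vector_mult_def axis_def sum_distrib_left algebra_simps if_distrib cong: if_cong)

lemma bil_axis_l: "axis i t \<bullet> y = t * y$i"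
  by (simp add: inner_axis' )

lemma mv_nth: "(X *v x)$i = (\<Sum>j\<in>UNIV. X$i$j * x$j)"
  by (simp add: matrix_vector_mult_def)

lemma mv_axis: "(X *v axis i t)$k = X$k$i * t"
  by (simp add: mv_nth axis_def if_distrib cong: if_cong)

lemma sum_axis: "(\<Sum>k\<in>UNIV. f k * axis i t $ k) = f i * (t::real)"
  by (simp add: axis_def if_distrib cong: if_cong)

lemma quad_axis: "axis i t \<bullet> (X *v axis i t) = t * t * X$i$i"
  by (simp add: bil_axis_l mv_axis)

lemma psd_quad: "X \<in> psd_cone \<Longrightarrow> 0 \<le> x \<bullet> (X *v x)"
  by (simp add: psd_cone_def)

lemma psd_sym: "X \<in> psd_cone \<Longrightarrow> X$i$j = X$j$i"
  by (simp add: psd_cone_def sym_mat_iff)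

lemma diag_zero_row:
  assumes X: "X \<in> psd_cone" and d: "X$i$i = 0"
  shows "X$i$j = 0"
proof (rule ccontr)
  assume c: "X$i$j \<noteq> 0"
  define a where "a = -(X$j$j + 1) / (2 * X$i$j)"
  define y where "y = axis j (1::real) + axis i a"
  have "y \<bullet> (X *v y) = X$j$j + a * X$j$i + a * X$i$j + a * a * X$i$i"
    unfolding y_def quad_add by (simp add: bil_axis_l mv_axis)
  also have "\<dots> = X$j$j + 2 * a * X$i$j" using d psd_sym[OF X, of i j] by simp
  also have "\<dots> = -1" using c by (simp add: a_def field_simps)
  finally show False using psd_quad[OF X, of y] by simp
qed

lemma psd_step:
  assumes X: "X \<in> psd_cone" and d: "X$i$i > 0"
  defines "v \<equiv> (\<chi> k. X$k$i / sqrt (X$i$i))"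
  shows "X - outer v \<in> psd_cone"
proof -
  let ?d = "X$i$i"
  have sym: "sym_mat (X - outer v)"
    using psd_sym[OF X] by (simp add: sym_mat_iff outer_def v_def)
  have "x \<bullet> ((X - outer v) *v x) \<ge> 0" for x
  proof -
    define w where "w = (\<Sum>k\<in>UNIV. x$k * X$k$i)"
    define t where "t = - w / ?d"
    have vx: "v \<bullet> x = w / sqrt ?d"
      by (simp add: v_def w_def inner_vec_def sum_divide_distrib algebra_simps)
    have wi: "(X *v x)$i = w"
      unfolding mv_nth w_def using psd_sym[OF X] by (simp add: mult.commute)
    have "x \<bullet> ((X - outer v) *v x) = x \<bullet> (X *v x) - (v \<bullet> x)^2"
      by (simp add: matrix_vector_mult_diff_rdistrib inner_diff_right quad_outer inner_commute)
    also have "\<dots> = x \<bullet> (X *v x) - w^2 / ?d"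
      using d by (simp add: vx power_divide)
    also have "\<dots> = (x + axis i t) \<bullet> (X *v (x + axis i t))"
      unfolding quad_add using d
      by (simp add: sum_axis quad_axis bil_axis_l bil_axis_r mv_axis wi w_def[symmetric] t_def field_simps power2_eq_square)
    also have "\<dots> \<ge> 0" by (rule psd_quad[OF X])
    finally show ?thesis .
  qed
  then show ?thesis using sym by (simp add: psd_cone_def)
qed



lemma conv_outer_scale:
  assumes "c \<ge> 0" "X \<in> convex hull (range outer)"
  shows "c *\<^sub>R X \<in> convex hull (range outer)"
proof -
  have "c *\<^sub>R X \<in> (\<lambda>x. c *\<^sub>R x) ` (convex hull (range outer))" using assms(2) by blast
  also have "\<dots> = convex hull ((\<lambda>x. c *\<^sub>R x) ` range outer)" by (simp add: convex_hull_scaling)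
  also have "\<dots> \<subseteq> convex hull (range outer)"
    by (rule hull_mono) (auto simp: outer_scale[OF assms(1)])
  finally show ?thesis .
qed

lemma conv_outer_add:
  assumes "X \<in> convex hull (range outer)" "Y \<in> convex hull (range outer)"
  shows "X + Y \<in> convex hull (range outer)"
proof -
  have "(1/2) *\<^sub>R (2 *\<^sub>R X) + (1/2) *\<^sub>R (2 *\<^sub>R Y) \<in> convex hull (range outer)"
    by (rule convexD[OF convex_convex_hull]) (auto intro: conv_outer_scale assms)
  then show ?thesis by simp
qed

lemma psd_conv: "X \<in> psd_cone \<Longrightarrow> X \<in> convex hull (range outer)"
proof (induct "card {k. X$k \<noteq> 0}" arbitrary: X rule: less_induct)
  case less
  note X = less.prems
  show ?case
  proof (cases "X = 0")
    case True
    then show ?thesis by (metis hull_inc outer_zero rangeI)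
  next
    case False
    then obtain i where xi: "X$i \<noteq> 0" by (auto simp: vec_eq_iff)
    have "X$i$i \<noteq> 0"
      using xi diag_zero_row[OF X, of i] by (auto simp: vec_eq_iff)
    moreover have "X$i$i \<ge> 0" using psd_quad[OF X, of "axis i 1"] by (simp add: quad_axis)
    ultimately have d: "X$i$i > 0" by simp
    define v where "v = (\<chi> k. X$k$i / sqrt (X$i$i))"
    have X': "X - outer v \<in> psd_cone" using psd_step[OF X d] by (simp add: v_def)
    have sub: "{k. (X - outer v)$k \<noteq> 0} \<subset> {k. X$k \<noteq> 0}"
    proof -
      have "(X - outer v)$k = 0" if "X$k = 0" for k
        using that by (simp add: vec_eq_iff outer_def v_def)
      moreover have "(X - outer v)$i = 0"
      proof -
        have "(X - outer v)$i$l = 0" for l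
        proof -
          have s: "sqrt (X$i$i) * sqrt (X$i$i) = X$i$i" using d by simp
          have "(X - outer v)$i$l = X$i$l - (X$i$i / sqrt (X$i$i)) * (X$l$i / sqrt (X$i$i))"
            by (simp add: outer_def v_def)
          also have "\<dots> = X$i$l - X$l$i * (X$i$i / (sqrt (X$i$i) * sqrt (X$i$i)))"
            by (simp add: field_simps)
          also have "\<dots> = 0" using d psd_sym[OF X, of i l] by (simp only: s) simp
          finally show ?thesis .
        qed
        then show ?thesis by (simp add: vec_eq_iff)
      qed
      ultimately show ?thesis using xi by blast
    qed
    have "card {k. (X - outer v)$k \<noteq> 0} < card {k. X$k \<noteq> 0}"
      by (rule psubset_card_mono[OF _ sub]) simp
    then have "X - outer v \<in> convex hull (range outer)" using less.hyps X' by blast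
    then have "(X - outer v) + outer v \<in> convex hull (range outer)"
      by (rule conv_outer_add) (simp add: hull_inc)
    then show ?thesis by simp
  qed
qed



definition base :: "(real^'n^'n) set \<Rightarrow> (real^'n^'n) set" where
  "base K = K \<inter> {X. mtrace X = 1}"

lemma frob_inner: "frob M X = M \<bullet> transpose X"
  by (simp add: frob_eq inner_vec_def transpose_def)

lemma frob_inner2: "frob M X = transpose M \<bullet> X"
  unfolding frob_eq inner_vec_def transpose_def by (simp, rule sum.swap)

lemma frob_add_scale: "frob M (X + s *\<^sub>R D) = frob M X + s * frob M D"
  by (simp add: frob_inner2 inner_add_right)

lemma frob_scale: "frob M (s *\<^sub>R D) = s * frob M D"
  by (simp add: frob_inner2)

lemma quad_inner: "x \<bullet> (X *v x) = outer x \<bullet> X"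
  by (simp add: inner_vec_def matrix_vector_mult_def outer_def sum_distrib_left mult_ac)

lemma trace_inner: "mtrace X = mat 1 \<bullet> X"
  by (simp add: mtrace_def inner_vec_def mat_def mult_if_delta)

lemma axis2_inner: "axis i (axis j (1::real)) \<bullet> X = X$i$j"
  by (simp add: inner_axis')

lemma psd_eq: "psd_cone = (\<Inter>i. \<Inter>j. {X. (axis i (axis j 1) - axis j (axis i 1)) \<bullet> X = 0})
   \<inter> (\<Inter>x. {X. outer x \<bullet> X \<ge> 0})"
  by (auto simp: psd_cone_def sym_mat_iff inner_diff_left axis2_inner quad_inner)

lemma psd_closed: "closed psd_cone"
  unfolding psd_eq by (intro closed_Int closed_INT ballI closed_hyperplane closed_halfspace_ge)

lemma SM_eq: "SM A = psd_cone \<inter> (\<Inter>M\<in>A. {X. transpose M \<bullet> X \<ge> 0})"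
  by (auto simp: SM_def frob_inner2)

lemma SM_closed: "closed (SM A)"
  unfolding SM_eq by (intro closed_Int closed_INT ballI closed_halfspace_ge psd_closed)

lemma psd_convex: "convex psd_cone"
  unfolding psd_eq by (intro convex_Int convex_INT convex_hyperplane convex_halfspace_ge)

lemma SM_convex: "convex (SM A)"
  unfolding SM_eq by (intro convex_Int convex_INT convex_halfspace_ge psd_convex)

lemma SM_scale: "c \<ge> 0 \<Longrightarrow> X \<in> SM A \<Longrightarrow> c *\<^sub>R X \<in> SM A"
  unfolding SM_eq psd_eq by auto

lemma SM_zero: "0 \<in> SM A"
  unfolding SM_eq psd_eq by auto

lemma tr1_convex: "convex {Y::real^'n^'n. mtrace Y = 1}"
  unfolding trace_inner by (rule convex_hyperplane)

lemma tr1_closed: "closed {Y::real^'n^'n. mtrace Y = 1}"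
  unfolding trace_inner by (rule closed_hyperplane)

lemma SM_sub: "A \<subseteq> B \<Longrightarrow> SM B \<subseteq> SM A"
  by (auto simp: SM_def)



lemma hull_tr1: "convex hull (T \<inter> {Y. mtrace Y = 1}) \<subseteq> {Y::real^'n^'n. mtrace Y = 1}"
  by (rule hull_minimal) (auto intro: tr1_convex)

lemma outer_trace_pos: "outer x \<noteq> 0 \<Longrightarrow> mtrace (outer x) > 0"
proof -
  assume "outer x \<noteq> 0"
  then have "x \<noteq> 0" by auto
  then show ?thesis by (simp add: mtrace_outer)
qed

lemma normalize_hull:
  fixes T :: "(real^'n^'n) set"
  assumes T: "T \<subseteq> range outer" and sc: "\<And>c t. c > 0 \<Longrightarrow> t \<in> T \<Longrightarrow> c *\<^sub>R t \<in> T"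
    and X: "X \<in> convex hull T"
  shows "X = 0 \<or> (mtrace X > 0 \<and> (1 / mtrace X) *\<^sub>R X \<in> convex hull (T \<inter> {Y. mtrace Y = 1}))"
proof -
  let ?H = "convex hull (T \<inter> {Y. mtrace Y = 1})"
  define P where "P = {X. X = 0 \<or> (mtrace X > 0 \<and> (1 / mtrace X) *\<^sub>R X \<in> ?H)}"
  have "T \<subseteq> P"
  proof
    fix t assume t: "t \<in> T"
    show "t \<in> P"
    proof (cases "t = 0")
      case True then show ?thesis by (simp add: P_def)
    next
      case False
      have pos: "mtrace t > 0" using t T False outer_trace_pos by blast
      have "(1 / mtrace t) *\<^sub>R t \<in> T" using sc[OF _ t] pos by simp
      moreover have "mtrace ((1 / mtrace t) *\<^sub>R t) = 1" using pos by (simp add: mtrace_scale)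
      ultimately have "(1 / mtrace t) *\<^sub>R t \<in> ?H" by (simp add: hull_inc)
      then show ?thesis using pos by (simp add: P_def)
    qed
  qed
  moreover have "convex P"
    unfolding convex_def
  proof (intro ballI allI impI)
    fix x y :: "real^'n^'n" and u v :: real
    assume x: "x \<in> P" and y: "y \<in> P" and u: "0 \<le> u" and v: "0 \<le> v" and uv: "u + v = 1"
    let ?Z = "u *\<^sub>R x + v *\<^sub>R y"
    have trZ: "mtrace ?Z = u * mtrace x + v * mtrace y" by (rule mtrace_lin)
    have hx: "x = 0 \<or> (mtrace x > 0 \<and> (1 / mtrace x) *\<^sub>R x \<in> ?H)" using x by (simp add: P_def)
    have hy: "y = 0 \<or> (mtrace y > 0 \<and> (1 / mtrace y) *\<^sub>R y \<in> ?H)" using y by (simp add: P_def)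
    show "?Z \<in> P"
    proof (cases "u *\<^sub>R x = 0")
      case ux: True
      then have Z: "?Z = v *\<^sub>R y" by simp
      show ?thesis
      proof (cases "v *\<^sub>R y = 0")
        case True
        then have "?Z = 0" using ux by auto
        then show ?thesis unfolding P_def by blast
      next
        case False
        then have v0: "v > 0" and y0: "y \<noteq> 0" using v by auto
        then have ty: "mtrace y > 0" "(1 / mtrace y) *\<^sub>R y \<in> ?H" using hy by auto
        have "(1 / mtrace ?Z) *\<^sub>R ?Z = (1 / mtrace y) *\<^sub>R y"
          using v0 ty by (simp add: Z mtrace_scale)
        then show ?thesis using ty v0 by (simp add: P_def Z mtrace_scale)
      qed
    next
      case ux: False
      then have u0: "u > 0" and x0: "x \<noteq> 0" using u by auto
      then have tx: "mtrace x > 0" "(1 / mtrace x) *\<^sub>R x \<in> ?H" using hx by auto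
      show ?thesis
      proof (cases "v *\<^sub>R y = 0")
        case True
        then have Z: "?Z = u *\<^sub>R x" by simp
        have "(1 / mtrace ?Z) *\<^sub>R ?Z = (1 / mtrace x) *\<^sub>R x"
          using u0 tx by (simp add: Z mtrace_scale)
        then show ?thesis using tx u0 by (simp add: P_def Z mtrace_scale)
      next
        case False
        then have v0: "v > 0" and y0: "y \<noteq> 0" using v by auto
        then have ty: "mtrace y > 0" "(1 / mtrace y) *\<^sub>R y \<in> ?H" using hy by auto
        define s where "s = u * mtrace x + v * mtrace y"
        have s0: "s > 0" using u0 v0 tx ty by (simp add: s_def add_pos_pos)
        have "(u * mtrace x / s) *\<^sub>R ((1 / mtrace x) *\<^sub>R x) + (v * mtrace y / s) *\<^sub>R ((1 / mtrace y) *\<^sub>R y) \<in> ?H"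
          by (rule convexD[OF convex_convex_hull tx(2) ty(2)])
             (use u0 v0 tx ty s0 in \<open>auto simp: add_divide_distrib[symmetric] s_def[symmetric]\<close>)
        moreover have "(u * mtrace x / s) *\<^sub>R ((1 / mtrace x) *\<^sub>R x) + (v * mtrace y / s) *\<^sub>R ((1 / mtrace y) *\<^sub>R y)
             = (1 / mtrace ?Z) *\<^sub>R ?Z"
          using tx ty s0 by (simp add: trZ s_def[symmetric] scaleR_add_right)
        ultimately show ?thesis using s0 by (simp add: P_def trZ s_def[symmetric])
      qed
    qed
  qed
  ultimately have "convex hull T \<subseteq> P" by (rule hull_minimal)
  then show ?thesis using X by (auto simp: P_def)
qed

lemma range_outer_scale: "c > 0 \<Longrightarrow> t \<in> range outer \<Longrightarrow> c *\<^sub>R t \<in> range outer"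
  using outer_scale[of c] by fastforce

lemma psd_trace: "X \<in> psd_cone \<Longrightarrow> X = 0 \<or> mtrace X > 0"
  using normalize_hull[OF subset_refl range_outer_scale psd_conv] by blast

lemma psd_base: "X \<in> psd_cone \<Longrightarrow> mtrace X = 1 \<Longrightarrow> X \<in> convex hull (range outer \<inter> {Y. mtrace Y = 1})"
  using normalize_hull[OF subset_refl range_outer_scale psd_conv, of X] by auto

lemma R1_sub: "convex hull (range outer \<inter> {Y. mtrace Y = 1}) \<subseteq> psd_cone \<inter> {Y::real^'n^'n. mtrace Y = 1}"
  by (rule hull_minimal) (auto intro: outer_psd convex_Int psd_convex tr1_convex)

lemma norm_outer: "norm (outer x) = x \<bullet> x"
proof -
  have "outer x \<bullet> outer x = (\<Sum>i\<in>UNIV. x$i*x$i) * (\<Sum>j\<in>UNIV. x$j*x$j)"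
    by (simp add: inner_vec_def outer_def sum_distrib_left sum_distrib_right mult_ac)
  then have "outer x \<bullet> outer x = (x \<bullet> x)^2" by (simp add: inner_vec_def power2_eq_square)
  then show ?thesis by (simp add: norm_eq_sqrt_inner)
qed

lemma R1_bounded: "bounded (convex hull (range outer \<inter> {Y::real^'n^'n. mtrace Y = 1}))"
proof -
  have "range outer \<inter> {Y::real^'n^'n. mtrace Y = 1} \<subseteq> cball 0 1"
    by (auto simp: norm_outer mtrace_outer)
  then have "bounded (range outer \<inter> {Y::real^'n^'n. mtrace Y = 1})" using bounded_subset by blast
  then show ?thesis by (rule bounded_convex_hull)
qed

lemma base_compact: "compact (base (SM A))"
proof -
  have "base (SM A) \<subseteq> convex hull (range outer \<inter> {Y. mtrace Y = 1})"
    using psd_base by (auto simp: base_def SM_def)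
  then have "bounded (base (SM A))" using R1_bounded bounded_subset by blast
  moreover have "closed (base (SM A))" unfolding base_def by (intro closed_Int SM_closed tr1_closed)
  ultimately show ?thesis by (simp add: compact_eq_bounded_closed)
qed

lemma base_convex: "convex (base (SM A))"
  unfolding base_def by (intro convex_Int SM_convex tr1_convex)



lemma mid_aux:
  fixes X D :: "'a::real_vector"
  shows "(1 - 1/2) *\<^sub>R (X + s *\<^sub>R D) + (1/2) *\<^sub>R (X + (-s) *\<^sub>R D) = X"
proof -
  have "(1 - 1/2) *\<^sub>R (X + s *\<^sub>R D) + (1/2) *\<^sub>R (X + (-s) *\<^sub>R D)
      = ((1/2) *\<^sub>R X + (1/2) *\<^sub>R X) + ((1/2) *\<^sub>R (s *\<^sub>R D) - (1/2) *\<^sub>R (s *\<^sub>R D))"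
    by (simp add: scaleR_add_right algebra_simps)
  also have "\<dots> = X" by (simp add: scaleR_left_distrib[symmetric])
  finally show ?thesis .
qed

lemma local_ext:
  fixes X :: "real^'n^'n"
  assumes C: "convex C" and XC: "X \<in> C"
    and ext: "X extreme_point_of (C \<inter> {Y. \<forall>M\<in>A. frob M Y \<ge> 0})"
    and A: "compact A" and pos: "\<forall>M\<in>A. frob M X > 0"
  shows "X extreme_point_of C"
  unfolding extreme_point_of_def
proof (intro conjI XC ballI notI)
  fix Y Z assume Y: "Y \<in> C" and Z: "Z \<in> C" and seg: "X \<in> open_segment Y Z"
  then obtain u where YZ: "Y \<noteq> Z" and u: "0 < u" "u < 1" and Xe: "X = (1 - u) *\<^sub>R Y + u *\<^sub>R Z"
    by (auto simp: in_segment)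
  obtain \<delta> where d0: "\<delta> > 0" and dl: "\<forall>M\<in>A. frob M X \<ge> \<delta>"
  proof (cases "A = {}")
    case True then show ?thesis using that[of 1] by auto
  next
    case False
    have "continuous_on A (\<lambda>M. frob M X)"
      unfolding frob_inner by (intro continuous_intros)
    then obtain M0 where "M0 \<in> A" "\<forall>M\<in>A. frob M0 X \<le> frob M X"
      using continuous_attains_inf[OF A False] by blast
    then show ?thesis using that[of "frob M0 X"] pos by auto
  qed
  obtain R where R: "\<forall>M\<in>A. norm M \<le> R"
    using compact_imp_bounded[OF A] by (auto simp: bounded_iff)
  define B where "B = max 0 R * norm (transpose (Y - Z))"
  have B0: "B \<ge> 0" by (simp add: B_def)
  have Bb: "\<bar>frob M (Y - Z)\<bar> \<le> B" if "M \<in> A" for M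
  proof -
    have "\<bar>frob M (Y - Z)\<bar> \<le> norm M * norm (transpose (Y - Z))"
      unfolding frob_inner by (rule Cauchy_Schwarz_ineq2)
    also have "\<dots> \<le> B" unfolding B_def
      by (rule mult_right_mono) (use R that in auto)
    finally show ?thesis .
  qed
  define s where "s = min (min u (1 - u)) (\<delta> / (B + 1))"
  have s0: "s > 0" using u d0 B0 by (simp add: s_def)
  have su: "s \<le> u" "s \<le> 1 - u" by (auto simp: s_def)
  have sB: "s * B \<le> \<delta>"
  proof -
    have "s * B \<le> (\<delta> / (B + 1)) * B" by (rule mult_right_mono) (auto simp: s_def B0)
    also have "\<dots> \<le> \<delta>" using d0 B0 by (simp add: field_simps)
    finally show ?thesis .
  qed
  define P where "P = X + s *\<^sub>R (Y - Z)"
  define Q where "Q = X + (- s) *\<^sub>R (Y - Z)"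
  have P: "P = (1 - u + s) *\<^sub>R Y + (u - s) *\<^sub>R Z"
    by (simp add: P_def Xe algebra_simps)
  have Q: "Q = (1 - u - s) *\<^sub>R Y + (u + s) *\<^sub>R Z"
    by (simp add: Q_def Xe algebra_simps)
  have PC: "P \<in> C" unfolding P by (rule convexD[OF C Y Z]) (use su u s0 in auto)
  have QC: "Q \<in> C" unfolding Q by (rule convexD[OF C Y Z]) (use su u s0 in auto)
  have Pc: "frob M P \<ge> 0" if "M \<in> A" for M
  proof -
    have "frob M P = frob M X + s * frob M (Y - Z)" unfolding P_def by (rule frob_add_scale)
    moreover have "s * (- B) \<le> s * frob M (Y - Z)"
      by (rule mult_left_mono) (use Bb[OF that] s0 in auto)
    moreover have "frob M X \<ge> \<delta>" using dl that by blast
    ultimately show ?thesis using sB by simp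
  qed
  have Qc: "frob M Q \<ge> 0" if "M \<in> A" for M
  proof -
    have "frob M Q = frob M X + (- s) * frob M (Y - Z)" unfolding Q_def by (rule frob_add_scale)
    moreover have "s * (- B) \<le> s * (- frob M (Y - Z))"
      by (rule mult_left_mono) (use Bb[OF that] s0 in auto)
    moreover have "frob M X \<ge> \<delta>" using dl that by blast
    ultimately show ?thesis using sB by simp
  qed
  have "P \<noteq> Q"
  proof
    assume "P = Q"
    have "P - Q = (s + s) *\<^sub>R (Y - Z)" by (simp only: P_def Q_def scaleR_left_distrib scaleR_minus_left add_diff_cancel_left diff_minus_eq_add)
    then have "(s + s) *\<^sub>R (Y - Z) = 0" using \<open>P = Q\<close> by simp
    then have "s + s = 0 \<or> Y - Z = 0" by (simp only: scaleR_eq_0_iff)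
    then show False using s0 YZ by auto
  qed
  moreover have "X = (1 - 1/2) *\<^sub>R P + (1/2) *\<^sub>R Q"
    by (simp only: P_def Q_def mid_aux)
  ultimately have "X \<in> open_segment P Q"
    unfolding in_segment by (intro conjI exI[of _ "1/2"]) auto
  moreover have "P \<in> C \<inter> {Y. \<forall>M\<in>A. frob M Y \<ge> 0}" "Q \<in> C \<inter> {Y. \<forall>M\<in>A. frob M Y \<ge> 0}"
    using PC QC Pc Qc by auto
  ultimately show False using ext by (auto simp: extreme_point_of_def)
qed



lemma strict_rank_one:
  fixes X :: "real^'n^'n"
  assumes X: "X extreme_point_of base (SM A)" and A: "compact A" and pos: "\<forall>M\<in>A. frob M X > 0"
  shows "X \<in> range outer"
proof -
  let ?R1 = "range outer \<inter> {Y::real^'n^'n. mtrace Y = 1}"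
  let ?C = "convex hull ?R1"
  have Xb: "X \<in> base (SM A)" using X by (simp add: extreme_point_of_def)
  then have XC: "X \<in> ?C" using psd_base by (auto simp: base_def SM_def)
  have sub: "?C \<inter> {Y. \<forall>M\<in>A. frob M Y \<ge> 0} \<subseteq> base (SM A)"
    using R1_sub by (auto simp: base_def SM_def)
  have "X extreme_point_of (?C \<inter> {Y. \<forall>M\<in>A. frob M Y \<ge> 0})"
    by (rule ext_sub[OF X _ sub]) (use XC pos in auto)
  then have "X extreme_point_of ?C"
    by (rule local_ext[OF convex_convex_hull XC _ A pos])
  then have "X \<in> ?R1" by (rule extreme_point_of_convex_hull)
  then show ?thesis by blast
qed

lemma SM_outer_scale: "c > 0 \<Longrightarrow> t \<in> SM A \<inter> range outer \<Longrightarrow> c *\<^sub>R t \<in> SM A \<inter> range outer"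
proof -
  assume c: "c > 0" and t: "t \<in> SM A \<inter> range outer"
  have "c *\<^sub>R t \<in> SM A" using SM_scale[of c t A] c t by simp
  moreover have "c *\<^sub>R t \<in> range outer" using range_outer_scale[OF c] t by blast
  ultimately show ?thesis by blast
qed

lemma ROG_ext:
  fixes X :: "real^'n^'n"
  assumes R: "ROG (SM A)" and X: "X extreme_point_of base (SM A)"
  shows "X \<in> range outer"
proof -
  let ?T = "SM A \<inter> range outer"
  have Xb: "X \<in> base (SM A)" using X by (simp add: extreme_point_of_def)
  then have "X \<in> convex hull ?T" using R by (simp add: ROG_def base_def)
  from normalize_hull[OF _ SM_outer_scale this]
  have "X = 0 \<or> (mtrace X > 0 \<and> (1 / mtrace X) *\<^sub>R X \<in> convex hull (?T \<inter> {Y. mtrace Y = 1}))"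
    by blast
  moreover have tr: "mtrace X = 1" using Xb by (simp add: base_def)
  ultimately have XH: "X \<in> convex hull (?T \<inter> {Y. mtrace Y = 1})" by auto
  have "convex hull (?T \<inter> {Y. mtrace Y = 1}) \<subseteq> base (SM A)"
    by (rule hull_minimal) (auto simp: base_def intro: base_convex[unfolded base_def])
  then have "X extreme_point_of convex hull (?T \<inter> {Y. mtrace Y = 1})"
    by (rule ext_sub[OF X XH])
  then have "X \<in> ?T \<inter> {Y. mtrace Y = 1}" by (rule extreme_point_of_convex_hull)
  then show ?thesis by blast
qed

lemma ext_ROG:
  fixes A :: "(real^'n^'n) set"
  assumes H: "\<And>X. X extreme_point_of base (SM A) \<Longrightarrow> X \<in> range outer"
  shows "ROG (SM A)"
  unfolding ROG_def
proof
  let ?T = "SM A \<inter> range outer"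
  show "convex hull ?T \<subseteq> SM A" by (rule hull_minimal) (auto intro: SM_convex)
  show "SM A \<subseteq> convex hull ?T"
  proof
    fix X assume X: "X \<in> SM A"
    then have "X \<in> psd_cone" by (simp add: SM_def)
    then consider "X = 0" | "mtrace X > 0" using psd_trace by blast
    then show "X \<in> convex hull ?T"
    proof cases
      case 1
      have "outer 0 \<in> ?T" using SM_zero[of A] by (simp del: outer_zero) (simp)
      then show ?thesis using 1 by (simp add: hull_inc)
    next
      case 2
      define t where "t = mtrace X"
      define W where "W = (1 / t) *\<^sub>R X"
      have Wb: "W \<in> base (SM A)"
        using 2 X SM_scale[of "1/t" X A] by (simp add: base_def W_def t_def mtrace_scale)
      have "base (SM A) = convex hull {x. x extreme_point_of base (SM A)}"
        by (rule Krein_Milman_Minkowski[OF base_compact base_convex])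
      also have "\<dots> \<subseteq> convex hull ?T"
        by (rule hull_mono) (use H ext_sub_mem[of _ "base (SM A)"] in \<open>auto simp: base_def\<close>)
      finally have "W \<in> convex hull ?T" using Wb by blast
      then have "t *\<^sub>R W \<in> (\<lambda>x. t *\<^sub>R x) ` (convex hull ?T)" by blast
      also have "\<dots> = convex hull ((\<lambda>x. t *\<^sub>R x) ` ?T)" by (simp add: convex_hull_scaling)
      also have "\<dots> \<subseteq> convex hull ?T"
        by (rule hull_mono) (use SM_outer_scale 2 t_def in blast)
      finally show ?thesis using 2 by (simp add: W_def t_def)
    qed
  qed
qed



theorem lemma2p20:
  fixes Ms :: "nat \<Rightarrow> (real^'n^'n) set" and k :: nat
  assumes sym: "\<And>i. i \<in> {1..k} \<Longrightarrow> Ms i \<subseteq> symmats"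
    and cpt: "\<And>i. i \<in> {1..k} \<Longrightarrow> compact (Ms i)"
    and sep: "\<And>X i Mi. X \<in> psd_cone \<Longrightarrow> X \<noteq> 0 \<Longrightarrow> i \<in> {1..k} \<Longrightarrow>
               Mi \<in> Ms i \<Longrightarrow> frob Mi X = 0 \<Longrightarrow>
               (\<forall>M \<in> (\<Union>j\<in>{1..k}. Ms j) - Ms i. frob M X > 0)"
  shows "ROG (SM (\<Union>j\<in>{1..k}. Ms j)) \<longleftrightarrow> (\<forall>i\<in>{1..k}. ROG (SM (Ms i)))"
proof -
  define U where "U = (\<Union>j\<in>{1..k}. Ms j)"
  have sub: "i \<in> {1..k} \<Longrightarrow> base (SM U) \<subseteq> base (SM (Ms i))" for i
  proof -
    assume "i \<in> {1..k}"
    then have "Ms i \<subseteq> U" by (auto simp: U_def)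
    then have "SM U \<subseteq> SM (Ms i)" by (rule SM_sub)
    then show ?thesis by (auto simp: base_def)
  qed
  have lift: "Y \<in> SM U"
    if i: "i \<in> {1..k}" and Y: "Y \<in> base (SM (Ms i))" and M0: "M0 \<in> Ms i" "frob M0 Y = 0" for i Y M0
  proof -
    have Yp: "Y \<in> psd_cone" "\<forall>M\<in>Ms i. frob M Y \<ge> 0" using Y by (auto simp: base_def SM_def)
    have "Y \<noteq> 0" using Y by (auto simp: base_def)
    then have "\<forall>M\<in>U - Ms i. frob M Y > 0" using sep[OF Yp(1) _ i M0] by (simp add: U_def)
    then have "\<forall>M\<in>U. frob M Y \<ge> 0" using Yp(2) by (metis DiffI less_imp_le)
    then show ?thesis using Yp(1) by (simp add: SM_def)
  qed
  have "ROG (SM U) \<longleftrightarrow> (\<forall>i\<in>{1..k}. ROG (SM (Ms i)))"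
  proof
    assume R: "ROG (SM U)"
    show "\<forall>i\<in>{1..k}. ROG (SM (Ms i))"
    proof
      fix i assume i: "i \<in> {1..k}"
      show "ROG (SM (Ms i))"
      proof (rule ext_ROG)
        fix X assume X: "X extreme_point_of base (SM (Ms i))"
        have Xb: "X \<in> base (SM (Ms i))" using X by (rule ext_sub_mem)
        show "X \<in> range outer"
        proof (cases "\<exists>M0\<in>Ms i. frob M0 X = 0")
          case True
          then obtain M0 where M0: "M0 \<in> Ms i" "frob M0 X = 0" by blast
          have "X \<in> base (SM U)" using lift[OF i Xb M0] Xb by (simp add: base_def)
          then have "X extreme_point_of base (SM U)" by (rule ext_sub[OF X _ sub[OF i]])
          then show ?thesis by (rule ROG_ext[OF R])
        next
          case False
          then have "\<forall>M\<in>Ms i. frob M X > 0" using Xb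
            by (force simp: base_def SM_def order.order_iff_strict)
          then show ?thesis by (rule strict_rank_one[OF X cpt[OF i]])
        qed
      qed
    qed
  next
    assume R: "\<forall>i\<in>{1..k}. ROG (SM (Ms i))"
    show "ROG (SM U)"
    proof (rule ext_ROG)
      fix X assume X: "X extreme_point_of base (SM U)"
      have Xb: "X \<in> base (SM U)" using X by (rule ext_sub_mem)
      show "X \<in> range outer"
      proof (cases "\<exists>i\<in>{1..k}. \<exists>M0\<in>Ms i. frob M0 X = 0")
        case True
        then obtain i M0 where i: "i \<in> {1..k}" and M0: "M0 \<in> Ms i" "frob M0 X = 0" by blast
        have "X extreme_point_of base (SM (Ms i))"
          unfolding extreme_point_of_def
        proof (intro conjI ballI notI)
          show "X \<in> base (SM (Ms i))" using Xb sub[OF i] by blast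
          fix Y Z assume Y: "Y \<in> base (SM (Ms i))" and Z: "Z \<in> base (SM (Ms i))"
            and seg: "X \<in> open_segment Y Z"
          then obtain u where u: "0 < u" "u < 1" and Xe: "X = (1 - u) *\<^sub>R Y + u *\<^sub>R Z"
            by (auto simp: in_segment)
          have fY: "frob M0 Y \<ge> 0" using Y M0 by (auto simp: base_def SM_def)
          have fZ: "frob M0 Z \<ge> 0" using Z M0 by (auto simp: base_def SM_def)
          have "(1 - u) * frob M0 Y + u * frob M0 Z = 0" using M0(2) by (simp add: Xe frob_lin)
          moreover have "(1 - u) * frob M0 Y \<ge> 0" "u * frob M0 Z \<ge> 0" using fY fZ u by auto
          ultimately have "(1 - u) * frob M0 Y = 0" "u * frob M0 Z = 0" by linarith+
          then have "frob M0 Y = 0" "frob M0 Z = 0" using u by auto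
          then have "Y \<in> base (SM U)" "Z \<in> base (SM U)"
            using lift[OF i Y M0(1)] lift[OF i Z M0(1)] Y Z by (auto simp: base_def)
          then show False using X seg by (auto simp: extreme_point_of_def)
        qed
        then show ?thesis using ROG_ext R i by blast
      next
        case False
        then have "\<forall>M\<in>U. frob M X > 0" using Xb
          by (force simp: U_def base_def SM_def order.order_iff_strict)
        moreover have "compact U" unfolding U_def by (rule compact_UN) (auto intro: cpt)
        ultimately show ?thesis using strict_rank_one[OF X] by blast
      qed
    qed
  qed
  then show ?thesis by (simp add: U_def)
qed


end
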